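(* Let $n,x$ be integers with $1<x<n$, so that $G=C_{2n}(x,1,n)$ is a $5$-regular circulant graph. If $n\equiv x\equiv 1 \pmod 3$, then $G$ is word-representable.
   Context: Two distinct letters $x,y$ alternate in a word $w$ if, after deleting all other letters from $w$, the resulting word is of the form $xyxy\cdots$ or $yxyx\cdots$ (of even or odd length). A graph $G=(V,E)$ is word-representable if there is a word $w$ over the alphabet $V$, containing every letter of $V$ at least once, such that for all distinct $x,y\in V$, $xy\in E$ if and only if $x$ and $y$ alternate in $w$. For an integer $m$ and a set $R$ of positive integers each at most $m/2$, the circulant graph $C_m(R)$ has vertex set $\{0,1,\dots,m-1\}$, with $i$ and $j$ adjacent iff $\min(|i-j|,\,m-|i-j|)\in R$. $C_{2n}(x,1,n)$ denotes the circulant graph on $2n$ vertices with jump set $\{1,x,n\}$; it is $5$-regular exactly when $1<x<n$. *)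

theory Defs
  imports Main
begin

definition alternate :: "'a list \<Rightarrow> 'a \<Rightarrow> 'a \<Rightarrow> bool" where
  "alternate w x y \<longleftrightarrow>
     (let u = filter (\<lambda>c. c = x \<or> c = y) w in
        (\<forall>i < length u. u ! i = (if even i then x else y)) \<or>
        (\<forall>i < length u. u ! i = (if even i then y else x)))"

definition word_representable :: "'a set \<Rightarrow> ('a \<Rightarrow> 'a \<Rightarrow> bool) \<Rightarrow> bool" where
  "word_representable V E \<longleftrightarrow>
     (\<exists>w. set w = V \<and>
          (\<forall>x\<in>V. \<forall>y\<in>V. x \<noteq> y \<longrightarrow> (E x y \<longleftrightarrow> alternate w x y)))"

definition circ_dist :: "nat \<Rightarrow> nat \<Rightarrow> nat \<Rightarrow> nat" where
  "circ_dist m i j = min (if i \<le> j then j - i else i - j) (m - (if i \<le> j then j - i else i - j))"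

definition circulant_adj :: "nat \<Rightarrow> nat set \<Rightarrow> nat \<Rightarrow> nat \<Rightarrow> bool" where
  "circulant_adj m R i j \<longleftrightarrow> i < m \<and> j < m \<and> circ_dist m i j \<in> R"

end

theory Submission
  imports Defs
begin

lemma alt_sym: "alternate w x y = alternate w y x"
proof -
  have e: "(\<lambda>c. c = x \<or> c = y) = (\<lambda>c. c = y \<or> c = x)" by auto
  show ?thesis unfolding alternate_def Let_def e by blast
qed

lemma not_alt:
  assumes "x \<noteq> y" "filter (\<lambda>c. c = x \<or> c = y) w = pre @ [a,a] @ post"
  shows "\<not> alternate w x y"
proof
  assume A: "alternate w x y"
  define u where "u = filter (\<lambda>c. c = x \<or> c = y) w"
  have u: "u = pre @ [a,a] @ post" using assms(2) u_def by simp
  let ?i = "length pre"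
  have l: "Suc ?i < length u" using u by simp
  have a1: "u ! ?i = a" using u by (simp add: nth_append)
  have a2: "u ! Suc ?i = a" using u by (simp add: nth_append)
  from A have "(\<forall>i < length u. u ! i = (if even i then x else y)) \<or>
        (\<forall>i < length u. u ! i = (if even i then y else x))"
    unfolding alternate_def Let_def u_def by blast
  then show False
  proof
    assume h: "\<forall>i < length u. u ! i = (if even i then x else y)"
    have "u ! ?i = (if even ?i then x else y)" using h l by simp
    moreover have "u ! Suc ?i = (if even (Suc ?i) then x else y)" using h l by blast
    ultimately show False using a1 a2 assms(1) by (auto split: if_splits)
  next
    assume h: "\<forall>i < length u. u ! i = (if even i then y else x)"
    have "u ! ?i = (if even ?i then y else x)" using h l by simp
    moreover have "u ! Suc ?i = (if even (Suc ?i) then y else x)" using h l by blast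
    ultimately show False using a1 a2 assms(1) by (auto split: if_splits)
  qed
qed

lemma rep_nth: "\<forall>i < length (concat (replicate m [x,y,x,y])).
   concat (replicate m [x,y,x,y]) ! i = (if even i then x else y)"
proof (induction m)
  case 0
  then show ?case by simp
next
  case (Suc m)
  show ?case
  proof (intro allI impI)
    fix i assume i: "i < length (concat (replicate (Suc m) [x,y,x,y]))"
    show "concat (replicate (Suc m) [x,y,x,y]) ! i = (if even i then x else y)"
    proof (cases "i < 4")
      case True
      then have "i = 0 \<or> i = 1 \<or> i = 2 \<or> i = 3" by auto
      then show ?thesis by (elim disjE) (simp_all add: nth_append)
    next
      case False
      have "concat (replicate (Suc m) [x,y,x,y]) ! i = concat (replicate m [x,y,x,y]) ! (i - 4)"
        using False by (simp add: nth_append numeral_eq_Suc)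
      also have "\<dots> = (if even (i-4) then x else y)"
        using Suc.IH i False by simp
      also have "even (i-4) = even i" using False by simp
      finally show ?thesis .
    qed
  qed
qed

lemma alt_rep:
  assumes "filter (\<lambda>c. c = x \<or> c = y) w = concat (replicate m [x,y,x,y])"
  shows "alternate w x y"
  unfolding alternate_def Let_def assms by (intro disjI1) (rule rep_nth)

lemma filter_eq_single: "distinct L \<Longrightarrow> filter (\<lambda>c. c = p) L = (if p \<in> set L then [p] else [])"
  by (induction L) auto

lemma seg_proj:
  assumes "distinct L" "p \<in> set L" "q \<in> set L" "p \<noteq> q" "\<not> (P p \<and> P q)"
  shows "filter (\<lambda>c. c = p \<or> c = q) (filter P L) = (if P p then [p] else if P q then [q] else [])"
proof -
  have "filter (\<lambda>c. c = p \<or> c = q) (filter P L) = filter (\<lambda>c. P c \<and> (c = p \<or> c = q)) L" by simp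
  also have "\<dots> = (if P p then [p] else if P q then [q] else [])"
  proof -
    { assume "P p"
      then have "filter (\<lambda>c. P c \<and> (c = p \<or> c = q)) L = filter (\<lambda>c. c = p) L"
        using assms by (intro filter_cong) auto
      then have ?thesis using \<open>P p\<close> filter_eq_single[OF assms(1)] assms by simp }
    moreover
    { assume "\<not> P p" "P q"
      then have "filter (\<lambda>c. P c \<and> (c = p \<or> c = q)) L = filter (\<lambda>c. c = q) L"
        using assms by (intro filter_cong) auto
      then have ?thesis using \<open>\<not> P p\<close> \<open>P q\<close> filter_eq_single[OF assms(1)] assms by simp }
    moreover
    { assume "\<not> P p" "\<not> P q"
      then have "filter (\<lambda>c. P c \<and> (c = p \<or> c = q)) L = []"
        by (auto simp: filter_empty_conv)
      then have ?thesis using \<open>\<not> P p\<close> \<open>\<not> P q\<close> by simp }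
    ultimately show ?thesis by blast
  qed
  finally show ?thesis .
qed

lemma proj_segs:
  assumes "distinct L" "p \<in> set L" "q \<in> set L" "p \<noteq> q" "\<forall>P\<in>set Ps. \<not> (P p \<and> P q)"
  shows "filter (\<lambda>c. c = p \<or> c = q) (concat (map (\<lambda>P. filter P L) Ps))
       = concat (map (\<lambda>P. if P p then [p] else if P q then [q] else []) Ps)"
  using assms(5)
proof (induction Ps)
  case Nil
  then show ?case by simp
next
  case (Cons P Ps)
  then show ?case using seg_proj[OF assms(1-4), of P] by simp
qed


definition pp :: "('a \<Rightarrow> nat) \<Rightarrow> ('a \<Rightarrow> bool) list" where
  "pp col = [\<lambda>c. col c = 0, \<lambda>c. col c = 1, \<lambda>c. col c = 2,
             \<lambda>c. col c = 0, \<lambda>c. col c = 1, \<lambda>c. col c = 2]"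

definition gsame :: "('a \<Rightarrow> nat) \<Rightarrow> 'a \<Rightarrow> ('a \<Rightarrow> bool) list" where
  "gsame col u = [\<lambda>c. c = u \<and> col c = 0, \<lambda>c. col c = 0 \<and> c \<noteq> u,
     \<lambda>c. c = u \<and> col c = 1, \<lambda>c. col c = 1 \<and> c \<noteq> u,
     \<lambda>c. c = u \<and> col c = 2, \<lambda>c. col c = 2 \<and> c \<noteq> u,
     \<lambda>c. col c = 0 \<and> c \<noteq> u, \<lambda>c. c = u \<and> col c = 0,
     \<lambda>c. col c = 1 \<and> c \<noteq> u, \<lambda>c. c = u \<and> col c = 1,
     \<lambda>c. col c = 2 \<and> c \<noteq> u, \<lambda>c. c = u \<and> col c = 2]"

definition gab :: "('a \<Rightarrow> nat) \<Rightarrow> 'a \<Rightarrow> 'a \<Rightarrow> ('a \<Rightarrow> bool) list" where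
  "gab col u v = [\<lambda>c. col c = 0 \<and> c \<noteq> u, \<lambda>c. c = v, \<lambda>c. c = u,
     \<lambda>c. col c = 1 \<and> c \<noteq> v, \<lambda>c. col c = 2,
     \<lambda>c. col c = 0, \<lambda>c. col c = 1, \<lambda>c. col c = 2]"

definition gbc :: "('a \<Rightarrow> nat) \<Rightarrow> 'a \<Rightarrow> 'a \<Rightarrow> ('a \<Rightarrow> bool) list" where
  "gbc col u v = [\<lambda>c. col c = 0, \<lambda>c. col c = 1, \<lambda>c. col c = 2,
     \<lambda>c. col c = 0, \<lambda>c. col c = 1 \<and> c \<noteq> u, \<lambda>c. c = v, \<lambda>c. c = u,
     \<lambda>c. col c = 2 \<and> c \<noteq> v]"

definition gac :: "('a \<Rightarrow> nat) \<Rightarrow> 'a \<Rightarrow> 'a \<Rightarrow> ('a \<Rightarrow> bool) list" where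
  "gac col u v = [\<lambda>c. col c = 0, \<lambda>c. col c = 1, \<lambda>c. col c = 2 \<and> c \<noteq> v,
     \<lambda>c. c = u, \<lambda>c. c = v, \<lambda>c. col c = 0 \<and> c \<noteq> u,
     \<lambda>c. col c = 1, \<lambda>c. col c = 2]"

definition blk :: "('a \<Rightarrow> nat) \<Rightarrow> ('a \<Rightarrow> 'a \<Rightarrow> bool) \<Rightarrow> 'a \<Rightarrow> 'a \<Rightarrow> ('a \<Rightarrow> bool) list" where
  "blk col E u v = (if u \<noteq> v \<and> \<not> E u v then
      (if col u = col v then gsame col u
       else if col u = 0 \<and> col v = 1 then gab col u v
       else if col u = 1 \<and> col v = 2 then gbc col u v
       else if col u = 0 \<and> col v = 2 then gac col u v
       else pp col) else pp col)"

lemma blk_sep: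
  assumes "col p \<noteq> col q"
  shows "\<forall>P\<in>set (blk col E u v). \<not> (P p \<and> P q)"
  using assms unfolding blk_def pp_def gsame_def gab_def gbc_def gac_def by auto

lemma blk_edge:
  assumes "distinct L" "p \<in> set L" "q \<in> set L" "p \<noteq> q" "col p < col q" "col q < 3"
    and "E p q" "E q p"
  shows "filter (\<lambda>c. c = p \<or> c = q) (concat (map (\<lambda>P. filter P L) (blk col E u v))) = [p,q,p,q]"
proof -
  have cp: "col p = 0 \<or> col p = 1" and cq: "col q = 1 \<or> col q = 2" using assms(5,6) by auto
  have "filter (\<lambda>c. c = p \<or> c = q) (concat (map (\<lambda>P. filter P L) (blk col E u v)))
     = concat (map (\<lambda>P. if P p then [p] else if P q then [q] else []) (blk col E u v))"
    using proj_segs[OF assms(1-4) blk_sep] assms(5) by simp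
  also have "\<dots> = [p,q,p,q]"
    using cp cq assms(4,5,7,8) unfolding blk_def pp_def gsame_def gab_def gbc_def gac_def
    by (auto split: if_splits)
  finally show ?thesis .
qed


lemma blk_nonedge:
  assumes "distinct L" "p \<in> set L" "q \<in> set L" "p \<noteq> q" "col p \<le> col q" "col q < 3"
    and "\<not> E p q"
  shows "\<exists>pre a post. filter (\<lambda>c. c = p \<or> c = q) (concat (map (\<lambda>P. filter P L) (blk col E p q)))
          = pre @ [a,a] @ post"
proof -
  have sep: "\<forall>P\<in>set (blk col E p q). \<not> (P p \<and> P q)"
    using assms(4,7) unfolding blk_def pp_def gsame_def gab_def gbc_def gac_def by auto
  have cp: "col p = 0 \<or> col p = 1 \<or> col p = 2" and cq: "col q = 0 \<or> col q = 1 \<or> col q = 2"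
    using assms(5,6) by auto
  have "filter (\<lambda>c. c = p \<or> c = q) (concat (map (\<lambda>P. filter P L) (blk col E p q)))
     = concat (map (\<lambda>P. if P p then [p] else if P q then [q] else []) (blk col E p q))"
    using proj_segs[OF assms(1-4) sep] by simp
  also have "\<dots> \<in> {[p,q,q,p], [q,p,p,q], [p,p,q,q]}"
    using cp cq assms(4,5,7) unfolding blk_def pp_def gsame_def gab_def gbc_def gac_def
    by (auto split: if_splits)
  finally show ?thesis
    by (auto intro: exI[of _ "[p]"] exI[of _ "[q]"] exI[of _ "[]"])
qed

definition wrd :: "('a \<Rightarrow> nat) \<Rightarrow> ('a \<Rightarrow> 'a \<Rightarrow> bool) \<Rightarrow> 'a list \<Rightarrow> 'a list" where
  "wrd col E L = concat (map (\<lambda>(u,v). concat (map (\<lambda>P. filter P L) (blk col E u v))) (List.product L L))"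

lemma three_col_wr:
  fixes V :: "'a set" and E :: "'a \<Rightarrow> 'a \<Rightarrow> bool" and col :: "'a \<Rightarrow> nat"
  assumes fin: "finite V" and c3: "\<forall>x\<in>V. col x < 3"
    and propc: "\<forall>x\<in>V. \<forall>y\<in>V. E x y \<longrightarrow> col x \<noteq> col y"
    and sym: "\<forall>x\<in>V. \<forall>y\<in>V. E x y \<longrightarrow> E y x"
  shows "word_representable V E"
proof -
  obtain L where L: "distinct L" "set L = V" using finite_distinct_list[OF fin] by blast
  define w where "w = wrd col E L"
  have setw: "set w = V"
  proof
    show "set w \<subseteq> V" unfolding w_def wrd_def using L(2) by auto
    show "V \<subseteq> set w"
    proof
      fix z assume z: "z \<in> V"
      have "blk col E z z = pp col" unfolding blk_def by simp
      moreover have "col z = 0 \<or> col z = 1 \<or> col z = 2" using c3 z by auto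
      ultimately have "z \<in> set (concat (map (\<lambda>P. filter P L) (blk col E z z)))"
        using z L(2) unfolding pp_def by auto
      moreover have "(z,z) \<in> set (List.product L L)" using z L(2) by simp
      ultimately show "z \<in> set w" unfolding w_def wrd_def by force
    qed
  qed
  have filt: "filter F w = concat (map (\<lambda>(u,v). filter F (concat (map (\<lambda>P. filter P L) (blk col E u v)))) (List.product L L))" for F
    unfolding w_def wrd_def filter_concat map_map comp_def
    by (rule arg_cong[where f=concat], rule map_cong) (auto simp: filter_concat comp_def split: prod.splits)
  have edge: "alternate w p q" if "p \<in> V" "q \<in> V" "p \<noteq> q" "E p q" "col p < col q" for p q
  proof -
    have "E q p" using sym that by blast
    have m: "map (\<lambda>(u,v). filter (\<lambda>c. c = p \<or> c = q) (concat (map (\<lambda>P. filter P L) (blk col E u v)))) (List.product L L)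
        = map (\<lambda>_. [p,q,p,q]) (List.product L L)"
      using blk_edge[OF L(1), of p q col E] that \<open>E q p\<close> c3 L(2)
      by (intro map_cong) auto
    have "filter (\<lambda>c. c = p \<or> c = q) w = concat (replicate (length (List.product L L)) [p,q,p,q])"
      unfolding filt m map_replicate_const ..
    then show ?thesis by (rule alt_rep)
  qed
  have nonedge: "\<not> alternate w p q" if "p \<in> V" "q \<in> V" "p \<noteq> q" "\<not> E p q" "col p \<le> col q" for p q
  proof -
    have pL: "p \<in> set L" "q \<in> set L" "col q < 3" using that c3 L(2) by auto
    note th = that
    obtain pre a post where pa: "filter (\<lambda>c. c = p \<or> c = q) (concat (map (\<lambda>P. filter P L) (blk col E p q)))
          = pre @ [a,a] @ post"
      using blk_nonedge[where col=col and E=E, OF L(1) pL(1,2) th(3) th(5) pL(3) th(4)] by auto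
    have "(p,q) \<in> set (List.product L L)" using that L(2) by simp
    then obtain xs ys where xy: "List.product L L = xs @ (p,q) # ys" by (meson split_list)
    define g where "g = (\<lambda>(u,v). filter (\<lambda>c. c = p \<or> c = q) (concat (map (\<lambda>P. filter P L) (blk col E u v))))"
    have "filter (\<lambda>c. c = p \<or> c = q) w = concat (map g xs) @ g (p,q) @ concat (map g ys)"
      unfolding filt xy g_def by simp
    also have "g (p,q) = pre @ [a,a] @ post" unfolding g_def using pa by simp
    finally have "filter (\<lambda>c. c = p \<or> c = q) w = (concat (map g xs) @ pre) @ [a,a] @ (post @ concat (map g ys))"
      by simp
    then show ?thesis by (rule not_alt[OF \<open>p \<noteq> q\<close>])
  qed
  show ?thesis unfolding word_representable_def
  proof (intro exI[of _ w] conjI ballI impI)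
    show "set w = V" by (rule setw)
    fix x y assume x: "x \<in> V" and y: "y \<in> V" and xy: "x \<noteq> y"
    show "E x y = alternate w x y"
    proof (cases "col x \<le> col y")
      case True
      show ?thesis
      proof (cases "E x y")
        case True
        then have "col x < col y" using propc x y \<open>col x \<le> col y\<close> by force
        then show ?thesis using edge x y xy True by blast
      next
        case False
        then show ?thesis using nonedge x y xy \<open>col x \<le> col y\<close> by blast
      qed
    next
      case False
      show ?thesis
      proof (cases "E x y")
        case True
        then have "E y x" using sym x y by blast
        then have "col y < col x" using False by simp
        have "alternate w y x" using edge[of y x] x y xy \<open>E y x\<close> \<open>col y < col x\<close> by blast
        then show ?thesis using True alt_sym[of w x y] by simp
      next
        case nE: False
        then have "\<not> E y x" using sym x y by blast
        have "col y \<le> col x" using False by simp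
        then have "\<not> alternate w y x" using nonedge[of y x] x y xy \<open>\<not> E y x\<close> by blast
        then show ?thesis using nE alt_sym[of w x y] by simp
      qed
    qed
  qed
qed

lemma circ_sym: "circ_dist m i j = circ_dist m j i"
  unfolding circ_dist_def by auto

lemma key1: assumes "(D::nat) mod 3 = 1" shows "i mod 3 \<noteq> (i + D) mod 3"
proof -
  have "(i + D) mod 3 = (i mod 3 + D mod 3) mod 3" by (simp add: mod_add_eq)
  also have "\<dots> = (i mod 3 + 1) mod 3" using assms by simp
  finally have e: "(i + D) mod 3 = (i mod 3 + 1) mod 3" .
  have "i mod 3 < 3" by simp
  then have "i mod 3 = 0 \<or> i mod 3 = 1 \<or> i mod 3 = 2" by linarith
  then show ?thesis using e by auto
qed
lemma key2: assumes "(D::nat) + e = 2*n" "e mod 3 = 1" "n mod 3 = 1" shows "D mod 3 = 1"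
proof -
  have "(D + e) mod 3 = (2 * (n mod 3)) mod 3" using assms(1) by (simp add: mod_mult_right_eq)
  then have "(D mod 3 + 1) mod 3 = 2" using assms(2,3) by (simp add: mod_add_eq[symmetric] mod_add_left_eq)
  moreover have "D mod 3 < 3" by simp
  then have "D mod 3 = 0 \<or> D mod 3 = 1 \<or> D mod 3 = 2" by linarith
  ultimately show ?thesis by auto
qed
lemma prop_le:
  fixes n x :: nat
  assumes "n mod 3 = 1" "x mod 3 = 1" "i \<le> j" "j < 2*n"
    and "circ_dist (2*n) i j \<in> {1, x, n}"
  shows "i mod 3 \<noteq> j mod 3"
proof -
  define D where "D = j - i"
  have j: "j = i + D" using assms(3) D_def by simp
  have cd: "circ_dist (2*n) i j = min D (2*n - D)" unfolding circ_dist_def D_def using assms(3) by simp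
  have e1: "e mod 3 = 1" if "e \<in> {1,x,n}" for e using that assms(1,2) by auto
  have "D mod 3 = 1"
  proof (cases "D \<le> 2*n - D")
    case True
    then have "circ_dist (2*n) i j = D" using cd by simp
    then show ?thesis using e1 assms(5) by metis
  next
    case False
    then have "circ_dist (2*n) i j = 2*n - D" using cd by simp
    then have "(2*n - D) mod 3 = 1" using e1 assms(5) by metis
    moreover have "D + (2*n - D) = 2*n" using j assms(4) by simp
    ultimately show ?thesis using key2 assms(1) by blast
  qed
  then show ?thesis using key1 j by metis
qed

lemma prop3:
  fixes n x :: nat
  assumes "n mod 3 = 1" "x mod 3 = 1"
    and "circulant_adj (2*n) {1, x, n} i j"
  shows "i mod 3 \<noteq> j mod 3"
proof -
  have ij: "i < 2*n" "j < 2*n" and d: "circ_dist (2*n) i j \<in> {1,x,n}"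
    using assms(3) unfolding circulant_adj_def by auto
  show ?thesis
  proof (cases "i \<le> j")
    case True
    then show ?thesis using prop_le[OF assms(1,2) True ij(2) d] by simp
  next
    case False
    have "circ_dist (2*n) j i \<in> {1,x,n}" using d circ_sym by metis
    moreover have "j \<le> i" using False by simp
    ultimately show ?thesis using prop_le[OF assms(1,2) \<open>j \<le> i\<close> ij(1)] by auto
  qed
qed
theorem corollary1:
  fixes n x :: nat
  assumes "1 < x" and "x < n"
    and "n mod 3 = 1" and "x mod 3 = 1"
  shows "word_representable {0..<2*n} (circulant_adj (2*n) {1, x, n})"
proof (rule three_col_wr[where col = "\<lambda>i. i mod 3"])
  show "finite {0..<2*n}" by simp
  show "\<forall>y\<in>{0..<2*n}. y mod 3 < 3" by simp
  show "\<forall>a\<in>{0..<2*n}. \<forall>b\<in>{0..<2*n}. circulant_adj (2*n) {1, x, n} a b \<longrightarrow> a mod 3 \<noteq> b mod 3"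
    using prop3[OF assms(3,4)] by blast
  show "\<forall>a\<in>{0..<2*n}. \<forall>b\<in>{0..<2*n}. circulant_adj (2*n) {1, x, n} a b \<longrightarrow> circulant_adj (2*n) {1, x, n} b a"
    unfolding circulant_adj_def using circ_sym by metis
qed

end
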